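(* Let $d$ be a premetric with open balls on a topological space $X$, and let $A\subset X$ be non-empty. Then the following are equivalent: (1) $\overline d_A=\overline d^\circ_A$; (2) $\overline d_A$ is continuous; (3) $\overline d^\circ_A$ is continuous. Moreover, the following two conditions are equivalent and imply (1)–(3): (4) $d_A$ is continuous; (5) $\overline d_A=\overline d^\circ_A=d_A$.
   Context: A premetric on $X$ is $d:X\times X\to[0,\infty)$ with $d(x,x)=0$. $B_d(x,\varepsilon)=\{y:d(x,y)<\varepsilon\}$, $B_d(A,\varepsilon)=\bigcup_{a\in A}B_d(a,\varepsilon)$; $d$ has open balls if every $B_d(x,\varepsilon)$ is open in $X$. For non-empty $A\subset X$ and $x\in X$: $d_A(x)=\inf\{\varepsilon>0:x\in B_d(A,\varepsilon)\}$, $\overline d_A(x)=\inf\{\varepsilon>0:x\in\overline{B_d(A,\varepsilon)}\}$, $\overline d^\circ_A(x)=\inf\{\varepsilon>0:x\in B_d(A,\varepsilon)\cup\mathrm{int}\,\overline{B_d(A,\varepsilon)}\}$. *)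

theory Defs
  imports "HOL-Analysis.Analysis"
begin

definition premetric :: "('a \<Rightarrow> 'a \<Rightarrow> real) \<Rightarrow> bool" where
  "premetric d \<longleftrightarrow> (\<forall>x y. 0 \<le> d x y) \<and> (\<forall>x. d x x = 0)"

definition pball :: "('a \<Rightarrow> 'a \<Rightarrow> real) \<Rightarrow> 'a \<Rightarrow> real \<Rightarrow> 'a set" where
  "pball d x e = {y. d x y < e}"

definition pball_set :: "('a \<Rightarrow> 'a \<Rightarrow> real) \<Rightarrow> 'a set \<Rightarrow> real \<Rightarrow> 'a set" where
  "pball_set d A e = (\<Union>a\<in>A. pball d a e)"

definition has_open_balls :: "('a::topological_space \<Rightarrow> 'a \<Rightarrow> real) \<Rightarrow> bool" where
  "has_open_balls d \<longleftrightarrow> (\<forall>x e. open (pball d x e))"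

definition dA :: "('a \<Rightarrow> 'a \<Rightarrow> real) \<Rightarrow> 'a set \<Rightarrow> 'a \<Rightarrow> real" where
  "dA d A x = Inf {e. e > 0 \<and> x \<in> pball_set d A e}"

definition cdA :: "('a::topological_space \<Rightarrow> 'a \<Rightarrow> real) \<Rightarrow> 'a set \<Rightarrow> 'a \<Rightarrow> real" where
  "cdA d A x = Inf {e. e > 0 \<and> x \<in> closure (pball_set d A e)}"

definition cidA :: "('a::topological_space \<Rightarrow> 'a \<Rightarrow> real) \<Rightarrow> 'a set \<Rightarrow> 'a \<Rightarrow> real" where
  "cidA d A x = Inf {e. e > 0 \<and>
      x \<in> pball_set d A e \<union> interior (closure (pball_set d A e))}"

end

theory Submission
  imports Defs
begin

definition gen :: "(real \<Rightarrow> 'a set) \<Rightarrow> 'a \<Rightarrow> real" where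
  "gen F x = Inf {e. x \<in> F e}"

locale famF =
  fixes F :: "real \<Rightarrow> 'a set"
  assumes monoF: "\<And>e e'. e \<le> e' \<Longrightarrow> F e \<subseteq> F e'"
    and emptyF: "\<And>e. e \<le> 0 \<Longrightarrow> F e = {}"
    and exF: "\<And>x. \<exists>e. x \<in> F e"
begin

lemma ne: "{e. x \<in> F e} \<noteq> {}" using exF by auto

lemma bdd: "bdd_below {e. x \<in> F e}"
  unfolding bdd_below_def
  by (rule exI[of _ 0]) (metis emptyF empty_iff linorder_not_le mem_Collect_eq less_imp_le)

lemma less_iff: "gen F x < t \<longleftrightarrow> (\<exists>e<t. x \<in> F e)"
  unfolding gen_def using cInf_less_iff[OF ne bdd] by auto

lemma le_of: "x \<in> F s \<Longrightarrow> gen F x \<le> s"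
  unfolding gen_def by (rule cInf_lower) (auto intro: bdd)

lemma nonneg: "0 \<le> gen F x"
proof (rule ccontr)
  assume "\<not> 0 \<le> gen F x"
  then obtain e where "e < 0" "x \<in> F e" using less_iff by (metis not_le)
  then show False using emptyF by auto
qed

lemma le_iff: "gen F x \<le> t \<longleftrightarrow> (\<forall>e>t. x \<in> F e)"
proof
  assume h: "gen F x \<le> t"
  show "\<forall>e>t. x \<in> F e"
  proof (intro allI impI)
    fix e assume "t < e"
    then have "gen F x < e" using h by simp
    then obtain e' where "e' < e" "x \<in> F e'" using less_iff by auto
    then show "x \<in> F e" using monoF[of e' e] by auto
  qed
next
  assume h: "\<forall>e>t. x \<in> F e"
  show "gen F x \<le> t"
  proof (rule ccontr)
    assume "\<not> gen F x \<le> t"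
    then have "t < (t + gen F x)/2" "(t + gen F x)/2 < gen F x" by auto
    then show False using h le_of[of x "(t + gen F x)/2"] by force
  qed
qed

end

lemma gen_anti:
  assumes "famF F" "famF G" "\<And>e. F e \<subseteq> G e"
  shows "gen G x \<le> gen F x"
  using famF.le_iff[OF assms(1), of x "gen F x"] famF.le_iff[OF assms(2), of x "gen F x"] assms(3)
  by blast

lemma semicont:
  fixes f :: "'a::topological_space \<Rightarrow> real"
  assumes "\<And>t. open {x. f x < t}" "\<And>t. open {x. t < f x}"
  shows "continuous_on UNIV f"
proof -
  have "(f \<longlongrightarrow> f x) (at x within UNIV)" for x
  proof (rule order_tendstoI)
    fix a assume "a < f x"
    then show "\<forall>\<^sub>F y in at x within UNIV. a < f y"
      unfolding eventually_at_topological using assms(2)[of a] by (intro exI[of _ "{y. a < f y}"]) auto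
  next
    fix a assume "f x < a"
    then show "\<forall>\<^sub>F y in at x within UNIV. f y < a"
      unfolding eventually_at_topological using assms(1)[of a] by (intro exI[of _ "{y. f y < a}"]) auto
  qed
  then show ?thesis unfolding continuous_on_def by simp
qed

theorem proposition1p2:
  fixes d :: "'a::topological_space \<Rightarrow> 'a \<Rightarrow> real" and A :: "'a set"
  assumes "premetric d" and "has_open_balls d" and "A \<noteq> {}"
  shows "(cdA d A = cidA d A \<longleftrightarrow> continuous_on UNIV (cdA d A))
       \<and> (continuous_on UNIV (cdA d A) \<longleftrightarrow> continuous_on UNIV (cidA d A))
       \<and> (continuous_on UNIV (dA d A) \<longleftrightarrow> (cdA d A = cidA d A \<and> cidA d A = dA d A))
       \<and> (continuous_on UNIV (dA d A) \<longrightarrow> cdA d A = cidA d A)"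
proof -
  define B where "B = pball_set d A"
  define F1 where "F1 = (\<lambda>e. closure (B e))"
  define F2 where "F2 = (\<lambda>e. B e \<union> interior (closure (B e)))"
  have d0: "0 \<le> d x y" for x y using assms(1) unfolding premetric_def by auto
  obtain a0 where a0: "a0 \<in> A" using assms(3) by auto
  have Bmono: "B e \<subseteq> B e'" if "e \<le> e'" for e e'
    using that unfolding B_def pball_set_def pball_def by auto
  have Bempty: "B e = {}" if "e \<le> 0" for e
    using that d0 unfolding B_def pball_set_def pball_def by (auto simp: not_less intro: order_trans)
  have Bex: "\<exists>e. x \<in> B e" for x
    using a0 unfolding B_def pball_set_def pball_def by (intro exI[of _ "d a0 x + 1"]) (auto intro!: bexI[of _ a0])
  have Bopen: "open (B e)" for e
    using assms(2) unfolding B_def pball_set_def has_open_balls_def by auto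
  interpret f3: famF B using Bmono Bempty Bex by unfold_locales auto
  interpret f1: famF F1
  proof
    fix e e' :: real assume "e \<le> e'" then show "F1 e \<subseteq> F1 e'"
      unfolding F1_def by (rule closure_mono[OF Bmono])
  next
    fix e :: real assume "e \<le> 0" then show "F1 e = {}" unfolding F1_def using Bempty by simp
  next
    fix x obtain e where "x \<in> B e" using Bex by blast
    then show "\<exists>e. x \<in> F1 e" unfolding F1_def using closure_subset by blast
  qed
  interpret f2: famF F2
  proof
    fix e e' :: real assume "e \<le> e'" then show "F2 e \<subseteq> F2 e'"
    proof -
      have h: "B e \<subseteq> B e'" using Bmono[OF \<open>e \<le> e'\<close>] .
      have "interior (closure (B e)) \<subseteq> interior (closure (B e'))"
        by (rule interior_mono[OF closure_mono[OF h]])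
      then show ?thesis unfolding F2_def using h by blast
    qed
  next
    fix e :: real assume "e \<le> 0" then show "F2 e = {}" unfolding F2_def using Bempty by simp
  next
    fix x obtain e where "x \<in> B e" using Bex by blast
    then show "\<exists>e. x \<in> F2 e" unfolding F2_def by blast
  qed
  have eq3: "dA d A = gen B"
  proof
    fix x show "dA d A x = gen B x" unfolding dA_def gen_def B_def
      by (rule arg_cong[where f=Inf]) (metis (lifting) B_def Bempty empty_iff linorder_not_le)
  qed
  have eq1: "cdA d A = gen F1"
  proof
    fix x show "cdA d A x = gen F1 x" unfolding cdA_def gen_def F1_def
      by (rule arg_cong[where f=Inf]) (metis (lifting) B_def Bempty closure_empty empty_iff linorder_not_le)
  qed
  have eq2: "cidA d A = gen F2"
  proof
    fix x show "cidA d A x = gen F2 x" unfolding cidA_def gen_def F2_def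
      by (rule arg_cong[where f=Inf])
        (metis (lifting) B_def Bempty closure_empty interior_empty Un_empty empty_iff linorder_not_le)
  qed
  define f1 where "f1 = gen F1"
  define f2 where "f2 = gen F2"
  define f3 where "f3 = gen B"
  have F21: "F2 e \<subseteq> F1 e" for e unfolding F1_def F2_def
    using interior_subset closure_subset by blast
  have F32: "B e \<subseteq> F2 e" for e unfolding F2_def by blast
  have le12: "f1 x \<le> f2 x" for x unfolding f1_def f2_def
    by (rule gen_anti[OF f2.famF_axioms f1.famF_axioms F21])
  have le23: "f2 x \<le> f3 x" for x unfolding f2_def f3_def
    by (rule gen_anti[OF f3.famF_axioms f2.famF_axioms F32])
  have lsc1: "open {x. t < f1 x}" for t
  proof -
    have "{x. t < f1 x} = - (\<Inter>e\<in>{t<..}. F1 e)"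
    proof -
      have "t < f1 x \<longleftrightarrow> \<not> (\<forall>e>t. x \<in> F1 e)" for x
        unfolding f1_def using f1.le_iff[of x t] by (simp only: not_le[symmetric])
      then show ?thesis by auto
    qed
    moreover have "closed (\<Inter>e\<in>{t<..}. F1 e)" unfolding F1_def by auto
    ultimately show ?thesis by (metis open_Compl)
  qed
  have usc2: "open {x. f2 x < t}" for t
  proof -
    have "{x. f2 x < t} = (\<Union>e\<in>{..<t}. F2 e)"
      unfolding f2_def using f2.less_iff by auto
    moreover have "open (\<Union>e\<in>{..<t}. F2 e)" unfolding F2_def using Bopen by auto
    ultimately show ?thesis by simp
  qed
  have usc3: "open {x. f3 x < t}" for t
  proof -
    have "{x. f3 x < t} = (\<Union>e\<in>{..<t}. B e)"
      unfolding f3_def using f3.less_iff by auto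
    moreover have "open (\<Union>e\<in>{..<t}. B e)" using Bopen by auto
    ultimately show ?thesis by simp
  qed
  have inB: "f2 y \<le> s" if "y \<in> B s" for y s
    using le23[of y] f3.le_of[OF that] unfolding f3_def by linarith
  have in1: "x \<in> closure (B s)" if hx: "f1 x < s" for x s
  proof -
    obtain e where "e < s" "x \<in> F1 e" using hx f1.less_iff[of x s] unfolding f1_def by blast
    then have "x \<in> F1 s" using f1.monoF[of e s] by auto
    then show ?thesis unfolding F1_def .
  qed
  have P12: "continuous_on UNIV f1" if "f1 = f2"
    using semicont[of f1] lsc1 usc2 that by auto
  have P21: "f1 = f2" if c: "continuous_on UNIV f1"
  proof (rule ext, rule antisym[OF le12])
    fix x
    show "f2 x \<le> f1 x" unfolding f2_def
    proof (subst f2.le_iff, intro allI impI)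
      fix e assume "f1 x < e"
      define s where "s = (f1 x + e)/2"
      have "f1 x < s" "s < e" using \<open>f1 x < e\<close> unfolding s_def by auto
      have o: "open {y. f1 y < s}" using open_Collect_less[OF c continuous_on_const] by simp
      have "{y. f1 y < s} \<subseteq> closure (B s)" using in1 by auto
      then have "{y. f1 y < s} \<subseteq> interior (closure (B s))" using o interior_maximal by blast
      then have "x \<in> F2 s" using \<open>f1 x < s\<close> unfolding F2_def by auto
      then show "x \<in> F2 e" using f2.monoF[of s e] \<open>s < e\<close> by auto
    qed
  qed
  have P32: "f1 = f2" if c: "continuous_on UNIV f2"
  proof (rule ext, rule antisym[OF le12], rule ccontr)
    fix x assume "\<not> f2 x \<le> f1 x"
    define s where "s = (f1 x + f2 x)/2"
    have "f1 x < s" "s < f2 x" using \<open>\<not> f2 x \<le> f1 x\<close> unfolding s_def by auto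
    have cl: "closed {y. f2 y \<le> s}" using closed_Collect_le[OF c continuous_on_const] by simp
    have "B s \<subseteq> {y. f2 y \<le> s}" using inB by auto
    then have "closure (B s) \<subseteq> {y. f2 y \<le> s}" using cl closure_minimal by blast
    then show False using in1[OF \<open>f1 x < s\<close>] \<open>s < f2 x\<close> by auto
  qed
  have P4: "f1 = f3" if c: "continuous_on UNIV f3"
  proof (rule ext, rule antisym[OF order_trans[OF le12 le23]], rule ccontr)
    fix x assume "\<not> f3 x \<le> f1 x"
    define s where "s = (f1 x + f3 x)/2"
    have "f1 x < s" "s < f3 x" using \<open>\<not> f3 x \<le> f1 x\<close> unfolding s_def by auto
    have cl: "closed {y. f3 y \<le> s}" using closed_Collect_le[OF c continuous_on_const] by simp
    have "B s \<subseteq> {y. f3 y \<le> s}" using f3.le_of unfolding f3_def by auto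
    then have "closure (B s) \<subseteq> {y. f3 y \<le> s}" using cl closure_minimal by blast
    then show False using in1[OF \<open>f1 x < s\<close>] \<open>s < f3 x\<close> by auto
  qed
  have P4b: "f1 = f2" if c: "continuous_on UNIV f3"
  proof (rule ext, rule antisym[OF le12])
    fix x show "f2 x \<le> f1 x" using le23[of x] P4[OF c] by auto
  qed
  have P5: "continuous_on UNIV f3" if "f1 = f3"
    using semicont[of f3] lsc1 usc3 that by auto
  show ?thesis unfolding eq1 eq2 eq3 f1_def[symmetric] f2_def[symmetric] f3_def[symmetric]
    using P12 P21 P32 P4 P4b P5 by metis
qed

end
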